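(* Let $\varepsilon>0$, assume $(a,b,c)\neq(0,0,0)$, and let $0<\lambda<a_1$. Then the equilibrium point $$e_{2\lambda}=\Big(\frac{a}{\lambda-a_1},\frac{b}{\lambda-a_2},\frac{c}{\lambda-a_3}\Big)$$ of the $\varepsilon$-revised system $$\dot{\mathbf x}=\mathbf x\times\mathbf m(\mathbf x)+\varepsilon[(\mathbf x\times\mathbf m(\mathbf x))\times\mathbf m(\mathbf x)]$$ is unstable (not Lyapunov stable).
   Context: Fix constants $0<a_1<a_2<a_3$ and $a,b,c\in\mathbb R$. Set $\mathbf m(\mathbf x)=(a_1x^1+a,\ a_2x^2+b,\ a_3x^3+c)$; $\times$ is the cross product in $\mathbb R^3$. For $\lambda\notin\{a_1,a_2,a_3\}$ the point $e_{2\lambda}$ satisfies $\mathbf m(e_{2\lambda})=\lambda e_{2\lambda}$, so it is an equilibrium. *)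

theory Defs
  imports "HOL-Analysis.Analysis"
begin

definition mvec :: "real \<Rightarrow> real \<Rightarrow> real \<Rightarrow> real \<Rightarrow> real \<Rightarrow> real \<Rightarrow> real^3 \<Rightarrow> real^3" where
  "mvec a1 a2 a3 a b c x = vector [a1 * x$1 + a, a2 * x$2 + b, a3 * x$3 + c]"

definition revised_field :: "real \<Rightarrow> real \<Rightarrow> real \<Rightarrow> real \<Rightarrow> real \<Rightarrow> real \<Rightarrow> real \<Rightarrow> real^3 \<Rightarrow> real^3" where
  "revised_field eps a1 a2 a3 a b c x =
     cross3 x (mvec a1 a2 a3 a b c x)
     + eps *\<^sub>R cross3 (cross3 x (mvec a1 a2 a3 a b c x)) (mvec a1 a2 a3 a b c x)"

text \<open>For every eps > 0 there is delta > 0 such that every initial value within delta of x0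
  gives a solution defined for all t \<ge> 0 that stays within eps of x0. (The field here is
  polynomial, hence locally Lipschitz, so solutions are unique.)\<close>
definition lyapunov_stable :: "('a::real_normed_vector \<Rightarrow> 'a) \<Rightarrow> 'a \<Rightarrow> bool" where
  "lyapunov_stable f x0 \<longleftrightarrow>
     (\<forall>e>0. \<exists>d>0. \<forall>y0. dist y0 x0 < d \<longrightarrow>
        (\<exists>x. x 0 = y0 \<and>
             (\<forall>t\<ge>0. (x has_vector_derivative f (x t)) (at t within {0..})) \<and>
             (\<forall>t\<ge>0. dist (x t) x0 < e)))"

definition e2 :: "real \<Rightarrow> real \<Rightarrow> real \<Rightarrow> real \<Rightarrow> real \<Rightarrow> real \<Rightarrow> real \<Rightarrow> real^3" where
  "e2 a1 a2 a3 a b c lam = vector [a / (lam - a1), b / (lam - a2), c / (lam - a3)]"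

end

theory Submission
  imports Defs
begin

locale sysloc =
  fixes a1 a2 a3 a b c eps lam :: real
  assumes pos: "0 < a1" "a1 < a2" "a2 < a3" "0 < eps" "(a,b,c) \<noteq> (0,0,0)" "0 < lam" "lam < a1"
begin

definition m1 :: "real^3 \<Rightarrow> real" where "m1 y = a1 * y$1 + a"
definition m2 :: "real^3 \<Rightarrow> real" where "m2 y = a2 * y$2 + b"
definition m3 :: "real^3 \<Rightarrow> real" where "m3 y = a3 * y$3 + c"
definition H :: "real^3 \<Rightarrow> real" where
  "H y = (a1*(y$1)^2 + a2*(y$2)^2 + a3*(y$3)^2)/2 + a*y$1 + b*y$2 + c*y$3"
definition C :: "real^3 \<Rightarrow> real" where "C y = (y$1)^2 + (y$2)^2 + (y$3)^2"
definition g :: "real^3 \<Rightarrow> real" where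
  "g y = (y$2*m3 y - y$3*m2 y)^2 + (y$3*m1 y - y$1*m3 y)^2 + (y$1*m2 y - y$2*m1 y)^2"
definition Phi :: "real \<Rightarrow> real^3 \<Rightarrow> real" where "Phi mu y = C y - 2/mu * H y"
definition F where "F = revised_field eps a1 a2 a3 a b c"

lemma F_comp:
  "F y $ 1 = (y$2*m3 y - y$3*m2 y) + eps * ((y$3*m1 y - y$1*m3 y) * m3 y - (y$1*m2 y - y$2*m1 y) * m2 y)"
  "F y $ 2 = (y$3*m1 y - y$1*m3 y) + eps * ((y$1*m2 y - y$2*m1 y) * m1 y - (y$2*m3 y - y$3*m2 y) * m3 y)"
  "F y $ 3 = (y$1*m2 y - y$2*m1 y) + eps * ((y$2*m3 y - y$3*m2 y) * m2 y - (y$3*m1 y - y$1*m3 y) * m1 y)"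
  unfolding F_def revised_field_def mvec_def m1_def m2_def m3_def
  by (simp_all add: cross3_def vector_def)

lemma ident1: "y$1 * F y $ 1 + y$2 * F y $ 2 + y$3 * F y $ 3 = - eps * g y"
  unfolding F_comp g_def by algebra

lemma ident2: "m1 y * F y $ 1 + m2 y * F y $ 2 + m3 y * F y $ 3 = 0"
  unfolding F_comp by algebra

definition e :: "real^3" where "e = e2 a1 a2 a3 a b c lam"
definition W where "W y = Phi lam e - Phi lam y"
definition Q :: "real \<Rightarrow> real^3 \<Rightarrow> real^3 \<Rightarrow> real" where
  "Q mu x y = (a1/mu - 1)*(y$1-x$1)^2 + (a2/mu - 1)*(y$2-x$2)^2 + (a3/mu - 1)*(y$3-x$3)^2"
definition muf :: "real^3 \<Rightarrow> real" where "muf y = (y$1 * m1 y + y$2 * m2 y + y$3 * m3 y) / C y"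

lemma e_comp: "e$1 = a/(lam-a1)" "e$2 = b/(lam-a2)" "e$3 = c/(lam-a3)"
  unfolding e_def e2_def by (simp_all add: vector_def)

lemma m_e: "m1 e = lam * e$1" "m2 e = lam * e$2" "m3 e = lam * e$3"
proof -
  have "lam - a1 \<noteq> 0" "lam - a2 \<noteq> 0" "lam - a3 \<noteq> 0" using pos by auto
  then show "m1 e = lam * e$1" "m2 e = lam * e$2" "m3 e = lam * e$3"
    unfolding m1_def m2_def m3_def e_comp by (simp_all add: field_simps)
qed

lemma Phi_quad:
  assumes "m1 x = mu * x$1" "m2 x = mu * x$2" "m3 x = mu * x$3" "mu \<noteq> 0"
  shows "Phi mu y = Phi mu x - Q mu x y"
proof -
  have A: "a = mu*x$1 - a1*x$1" "b = mu*x$2 - a2*x$2" "c = mu*x$3 - a3*x$3"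
    using assms unfolding m1_def m2_def m3_def by algebra+
  define k where "k = 1/mu"
  have k: "mu * k = 1" using assms(4) unfolding k_def by simp
  have d: "2/mu = 2*k" "a1/mu = a1*k" "a2/mu = a2*k" "a3/mu = a3*k" unfolding k_def by simp_all
  show ?thesis unfolding Phi_def C_def H_def Q_def unfolding A d using k by algebra
qed

lemma W_eq: "W y = Q lam e y"
  using Phi_quad[OF m_e, of y] pos unfolding W_def by simp

lemma C_pos: "y \<noteq> 0 \<Longrightarrow> C y > 0"
proof -
  assume "y \<noteq> 0"
  then obtain i where "y $ i \<noteq> 0" by (metis vec_eq_iff zero_index)
  then have "y$1 \<noteq> 0 \<or> y$2 \<noteq> 0 \<or> y$3 \<noteq> 0" by (metis exhaust_3)
  moreover have "(y$1)^2 \<ge> 0" "(y$2)^2 \<ge> 0" "(y$3)^2 \<ge> 0" by simp_all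
  ultimately show "C y > 0" unfolding C_def
    by (smt (verit) zero_less_power2)
qed

lemma eq_par:
  assumes "g y = 0" "y \<noteq> 0"
  shows "m1 y = muf y * y$1" "m2 y = muf y * y$2" "m3 y = muf y * y$3"
proof -
  define p where "p = y$2*m3 y - y$3*m2 y"
  define q where "q = y$3*m1 y - y$1*m3 y"
  define r where "r = y$1*m2 y - y$2*m1 y"
  have s: "p^2 + q^2 + r^2 = 0" using assms(1) unfolding g_def p_def q_def r_def .
  have "p^2 \<ge> 0" "q^2 \<ge> 0" "r^2 \<ge> 0" by simp_all
  then have "p^2 = 0" "q^2 = 0" "r^2 = 0" using s by linarith+
  then have z: "p = 0" "q = 0" "r = 0" by simp_all
  have Cp: "C y \<noteq> 0" using C_pos[OF assms(2)] by simp
  have "m1 y * C y - (y$1 * m1 y + y$2 * m2 y + y$3 * m3 y) * y$1 = - y$2 * r + y$3 * q"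
       "m2 y * C y - (y$1 * m1 y + y$2 * m2 y + y$3 * m3 y) * y$2 = y$1 * r - y$3 * p"
       "m3 y * C y - (y$1 * m1 y + y$2 * m2 y + y$3 * m3 y) * y$3 = - y$1 * q + y$2 * p"
    unfolding C_def p_def q_def r_def by (simp_all add: algebra_simps power2_eq_square)
  then have "m1 y * C y = (y$1 * m1 y + y$2 * m2 y + y$3 * m3 y) * y$1"
       "m2 y * C y = (y$1 * m1 y + y$2 * m2 y + y$3 * m3 y) * y$2"
       "m3 y * C y = (y$1 * m1 y + y$2 * m2 y + y$3 * m3 y) * y$3" unfolding z by simp_all
  then show "m1 y = muf y * y$1" "m2 y = muf y * y$2" "m3 y = muf y * y$3"
    unfolding muf_def using Cp by (simp_all add: field_simps)
qed

lemma Q_nonneg: "0 < mu \<Longrightarrow> mu < a1 \<Longrightarrow> Q mu x y \<ge> 0"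
proof -
  assume "0 < mu" "mu < a1"
  then have "a1/mu - 1 \<ge> 0" "a2/mu - 1 \<ge> 0" "a3/mu - 1 \<ge> 0" using pos
    by (simp_all add: field_simps)
  then show ?thesis unfolding Q_def by (intro add_nonneg_nonneg mult_nonneg_nonneg) auto
qed

lemma uniq:
  assumes "g y = 0" "y \<noteq> 0" "0 < muf y" "muf y < a1" "H y = H e"
  shows "W y \<le> 0"
proof -
  have "Phi (muf y) e = Phi (muf y) y - Q (muf y) y e"
    by (rule Phi_quad[OF eq_par[OF assms(1,2)]]) (use assms(3) in simp)
  then have "Phi (muf y) e \<le> Phi (muf y) y" using Q_nonneg[OF assms(3,4)] by simp
  then have "C e \<le> C y" unfolding Phi_def using assms(5) by simp
  then show ?thesis unfolding W_def Phi_def using assms(5) by simp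
qed

lemma cont_H: "continuous_on S H"
  unfolding H_def by (intro continuous_intros) auto
lemma cont_W: "continuous_on S W"
  unfolding W_def Phi_def H_def C_def by (intro continuous_intros) (use pos in auto)
lemma cont_g: "continuous_on S g"
  unfolding g_def m1_def m2_def m3_def by (intro continuous_intros)

lemma e_nz: "e \<noteq> 0"
proof
  assume "e = 0"
  then have "e$1 = 0" "e$2 = 0" "e$3 = 0" by simp_all
  moreover have "lam - a1 \<noteq> 0" "lam - a2 \<noteq> 0" "lam - a3 \<noteq> 0" using pos by auto
  ultimately have "a = 0" "b = 0" "c = 0" unfolding e_comp by simp_all
  then show False using pos by simp
qed

lemma muf_e: "muf e = lam"
proof -
  have "C e \<noteq> 0" using C_pos[OF e_nz] by simp
  then show ?thesis unfolding muf_def m_e by (simp add: C_def field_simps power2_eq_square)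
qed

lemma isCont_muf: "isCont muf e"
proof -
  have "C e \<noteq> 0" using C_pos[OF e_nz] by simp
  then show ?thesis unfolding muf_def m1_def m2_def m3_def C_def
    by (intro continuous_intros) (auto simp: C_def)
qed

lemma nbhd: "\<exists>r>0. r < norm e \<and> (\<forall>y. dist y e \<le> r \<longrightarrow> 0 < muf y \<and> muf y < a1)"
proof -
  have "min lam (a1 - lam) > 0" using pos by simp
  then obtain d where d: "d > 0" "\<And>y. dist y e < d \<Longrightarrow> dist (muf y) (muf e) < min lam (a1 - lam)"
    using isCont_muf unfolding continuous_at_eps_delta by blast
  define r where "r = min (d/2) (norm e / 2)"
  have "norm e > 0" using e_nz by simp
  moreover have "r \<le> norm e/2" "r \<le> d/2" unfolding r_def by auto
  moreover have "r > 0" unfolding r_def using d \<open>norm e > 0\<close> by auto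
  ultimately have "r > 0" "r < norm e" "r < d" using d \<open>norm e > 0\<close> by linarith+
  moreover have "0 < muf y \<and> muf y < a1" if "dist y e \<le> r" for y
  proof -
    have "dist (muf y) lam < min lam (a1 - lam)" using d(2)[of y] that \<open>r < d\<close> muf_e by simp
    then show ?thesis by (auto simp: dist_real_def)
  qed
  ultimately show ?thesis by blast
qed

lemma incr:
  fixes \<phi> \<phi>' :: "real \<Rightarrow> real"
  assumes "\<And>t. t \<ge> 0 \<Longrightarrow> (\<phi> has_real_derivative \<phi>' t) (at t within {0..})"
    and "\<And>t. t \<ge> 0 \<Longrightarrow> \<phi>' t \<ge> 0" and "0 \<le> T"
  shows "\<phi> 0 \<le> \<phi> T"
proof (rule DERIV_nonneg_imp_increasing_open[OF assms(3)])
  fix s assume s: "0 < s" "s < T"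
  have "(\<phi> has_real_derivative \<phi>' s) (at s within {0<..})"
    by (rule DERIV_subset[OF assms(1)]) (use s in auto)
  then have "DERIV \<phi> s :> \<phi>' s" using at_within_open[of s "{0<..}"] s by simp
  then show "\<exists>y. DERIV \<phi> s :> y \<and> y \<ge> 0" using assms(2)[of s] s by auto
next
  show "continuous_on {0..T} \<phi>"
    by (rule DERIV_continuous_on[where D=\<phi>'], rule DERIV_subset[OF assms(1)]) auto
qed

lemma deriv_HC:
  assumes "((\<lambda>t. x t $ 1) has_real_derivative d1) (at t within S)"
    "((\<lambda>t. x t $ 2) has_real_derivative d2) (at t within S)"
    "((\<lambda>t. x t $ 3) has_real_derivative d3) (at t within S)"
  shows "((\<lambda>t. H (x t)) has_real_derivative (m1 (x t) * d1 + m2 (x t) * d2 + m3 (x t) * d3)) (at t within S)"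
    "((\<lambda>t. C (x t)) has_real_derivative 2 * (x t $ 1 * d1 + x t $ 2 * d2 + x t $ 3 * d3)) (at t within S)"
  unfolding H_def C_def m1_def m2_def m3_def
  by (auto intro!: derivative_eq_intros assms simp: algebra_simps)


lemma norm3: "(norm (z::real^3))^2 = (z$1)^2 + (z$2)^2 + (z$3)^2"
  unfolding power2_norm_eq_inner by (simp add: inner_vec_def sum_3 power2_eq_square)

lemma inner3: "(y::real^3) \<bullet> z = y$1 * z$1 + y$2 * z$2 + y$3 * z$3"
  by (simp add: inner_vec_def sum_3)

lemma H_line: "H (e + s *\<^sub>R h) - H e = s * lam * (e \<bullet> h) + s^2/2 * (a1*(h$1)^2 + a2*(h$2)^2 + a3*(h$3)^2)"
proof -
  have "H (e + s *\<^sub>R h) - H e = s * (m1 e * h$1 + m2 e * h$2 + m3 e * h$3) + s^2/2 * (a1*(h$1)^2 + a2*(h$2)^2 + a3*(h$3)^2)"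
    unfolding H_def m1_def m2_def m3_def by (simp add: algebra_simps power2_eq_square)
  then show ?thesis unfolding m_e inner3 by (simp add: algebra_simps)
qed

lemma y0_exists:
  assumes "d > 0"
  shows "\<exists>y0. dist y0 e < d \<and> H y0 = H e \<and> y0 \<noteq> e"
proof -
  obtain w where "cross3 e w \<noteq> 0" using cross_basis_nonzero[OF e_nz] by blast
  define u where "u = cross3 e w"
  have u0: "u \<noteq> 0" using \<open>cross3 e w \<noteq> 0\<close> u_def by simp
  have ue: "u \<bullet> e = 0" unfolding u_def by (simp add: dot_cross_self inner_commute)
  define E where "E = norm e"
  define U where "U = norm u"
  have E0: "E > 0" using e_nz E_def by simp
  have U0: "U > 0" using u0 U_def by simp
  define \<tau> where "\<tau> = d * a1 * U / (4 * lam * E^2)"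
  have tau0: "\<tau> > 0" unfolding \<tau>_def using assms pos E0 U0 by simp
  define h where "h = u + \<tau> *\<^sub>R e"
  define N where "N = norm h"
  have ip: "e \<bullet> h = \<tau> * E^2" unfolding h_def E_def
    using ue by (simp add: inner_add_right inner_commute power2_norm_eq_inner)
  have N2: "N^2 = U^2 + \<tau>^2 * E^2" unfolding N_def h_def U_def E_def power2_norm_eq_inner
    using ue by (simp add: inner_add_left inner_add_right inner_commute power2_eq_square algebra_simps)
  have NU: "U \<le> N"
  proof (rule power2_le_imp_le)
    show "U^2 \<le> N^2" using N2 by (simp add: mult_nonneg_nonneg)
    show "0 \<le> N" unfolding N_def by simp
  qed
  have N0: "N > 0" using NU U0 by simp
  define P where "P = a1*(h$1)^2 + a2*(h$2)^2 + a3*(h$3)^2"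
  have PN: "a1 * N^2 \<le> P"
  proof -
    have "a1 * N^2 = a1*(h$1)^2 + a1*(h$2)^2 + a1*(h$3)^2" unfolding N_def norm3 by (simp add: algebra_simps)
    moreover have "a1*(h$2)^2 \<le> a2*(h$2)^2" "a1*(h$3)^2 \<le> a3*(h$3)^2"
      using pos by (auto intro!: mult_right_mono)
    ultimately show ?thesis unfolding P_def by linarith
  qed
  have P0: "P > 0" using PN N0 pos by (smt (verit) mult_pos_pos zero_less_power)
  define s where "s = - 2 * lam * (e \<bullet> h) / P"
  define y0 where "y0 = e + s *\<^sub>R h"
  have "H y0 - H e = s * lam * (e \<bullet> h) + s^2/2 * P" unfolding y0_def P_def by (rule H_line)
  also have "\<dots> = s * (lam * (e \<bullet> h) + s * P / 2)" by (simp add: algebra_simps power2_eq_square)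
  also have "lam * (e \<bullet> h) + s * P / 2 = 0" unfolding s_def using P0 by (simp add: field_simps)
  finally have Hy: "H y0 = H e" by simp
  have s_nz: "s \<noteq> 0" unfolding s_def ip using pos tau0 E0 P0 by simp
  have "h \<noteq> 0" using N0 N_def by auto
  then have ne: "y0 \<noteq> e" unfolding y0_def using s_nz by simp
  have "dist y0 e = \<bar>s\<bar> * N" unfolding y0_def N_def by (simp add: dist_norm)
  also have "\<dots> = 2 * lam * \<tau> * E^2 * N / P" unfolding s_def ip using pos tau0 P0 by (simp add: abs_mult)
  also have "\<dots> \<le> 2 * lam * \<tau> * E^2 * N / (a1 * N^2)"
    by (rule divide_left_mono[OF PN]) (use pos(1,6) tau0 N0 P0 E0 in auto)
  also have "\<dots> = 2 * lam * \<tau> * E^2 / (a1 * N)" using N0 by (simp add: power2_eq_square)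
  also have "\<dots> \<le> 2 * lam * \<tau> * E^2 / (a1 * U)"
    by (rule divide_left_mono) (use pos(1,6) tau0 N0 U0 NU E0 in auto)
  also have "\<dots> = d / 2" unfolding \<tau>_def using pos E0 U0 by (simp add: field_simps)
  also have "\<dots> < d" using assms by simp
  finally show ?thesis using Hy ne by blast
qed

lemma g_nonneg: "g y \<ge> 0"
  unfolding g_def by simp

lemma W_pos: "y \<noteq> e \<Longrightarrow> W y > 0"
proof -
  assume "y \<noteq> e"
  then have "C (y - e) > 0" using C_pos[of "y - e"] by simp
  have k: "a1/lam - 1 > 0" "a1/lam - 1 \<le> a2/lam - 1" "a1/lam - 1 \<le> a3/lam - 1"
    using pos by (simp_all add: field_simps divide_right_mono)
  have "(a1/lam - 1) * C (y - e) \<le> W y"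
  proof -
    have "(a1/lam - 1) * C (y - e) = (a1/lam - 1)*(y$1-e$1)^2 + (a1/lam - 1)*(y$2-e$2)^2 + (a1/lam - 1)*(y$3-e$3)^2"
      unfolding C_def by (simp add: algebra_simps)
    moreover have "(a1/lam - 1)*(y$2-e$2)^2 \<le> (a2/lam - 1)*(y$2-e$2)^2"
      "(a1/lam - 1)*(y$3-e$3)^2 \<le> (a3/lam - 1)*(y$3-e$3)^2"
      using k by (auto intro!: mult_right_mono)
    ultimately show ?thesis unfolding W_eq Q_def by linarith
  qed
  moreover have "(a1/lam - 1) * C (y - e) > 0" using k \<open>C (y - e) > 0\<close> by simp
  ultimately show ?thesis by linarith
qed

lemma main: "\<not> lyapunov_stable F e"
proof
  assume st: "lyapunov_stable F e"
  obtain r where r: "r > 0" "r < norm e" "\<And>y. dist y e \<le> r \<Longrightarrow> 0 < muf y \<and> muf y < a1"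
    using nbhd by blast
  obtain d where d: "d > 0" "\<And>y0. dist y0 e < d \<Longrightarrow> (\<exists>x. x 0 = y0 \<and>
             (\<forall>t\<ge>0. (x has_vector_derivative F (x t)) (at t within {0..})) \<and>
             (\<forall>t\<ge>0. dist (x t) e < r))"
    using st r(1) unfolding lyapunov_stable_def by blast
  obtain y0 where y0: "dist y0 e < d" "H y0 = H e" "y0 \<noteq> e" using y0_exists[OF d(1)] by blast
  obtain x where x0: "x 0 = y0" and xd: "\<And>t. t \<ge> 0 \<Longrightarrow> (x has_vector_derivative F (x t)) (at t within {0..})"
    and xb: "\<And>t. t \<ge> 0 \<Longrightarrow> dist (x t) e < r"
    using d(2)[OF y0(1)] by blast
  define w0 where "w0 = W y0"
  have w0: "w0 > 0" unfolding w0_def using W_pos[OF y0(3)] .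
  have dc: "((\<lambda>t. x t $ i) has_real_derivative F (x t) $ i) (at t within {0..})" if "t \<ge> 0" for t i
    unfolding has_real_derivative_iff_has_vector_derivative
    by (rule bounded_linear.has_vector_derivative[OF bounded_linear_vec_nth xd[OF that]])
  have dH: "((\<lambda>t. H (x t)) has_real_derivative 0) (at t within {0..})" if "t \<ge> 0" for t
    using deriv_HC(1)[OF dc[OF that] dc[OF that] dc[OF that]] ident2 by simp
  have dW: "((\<lambda>t. W (x t)) has_real_derivative 2 * eps * g (x t)) (at t within {0..})" if "t \<ge> 0" for t
  proof -
    have "((\<lambda>t. Phi lam e - (C (x t) - 2/lam * H (x t))) has_real_derivative
       (0 - (2 * (x t $ 1 * F (x t) $ 1 + x t $ 2 * F (x t) $ 2 + x t $ 3 * F (x t) $ 3) - 2/lam * 0))) (at t within {0..})"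
      by (intro DERIV_diff DERIV_const DERIV_cmult deriv_HC(2)[OF dc[OF that] dc[OF that] dc[OF that]] dH[OF that])
    then show ?thesis unfolding ident1 W_def Phi_def by (simp add: mult.assoc)
  qed
  have Hx: "H (x t) = H e" if "t \<ge> 0" for t
  proof -
    have "H (x 0) \<le> H (x t)" by (rule incr[where \<phi>'="\<lambda>_. 0"]) (use that dH in auto)
    moreover have "- H (x 0) \<le> - H (x t)"
    proof (rule incr[where \<phi>'="\<lambda>_. - 0"])
      fix s :: real assume "s \<ge> 0"
      show "((\<lambda>t. - H (x t)) has_real_derivative - 0) (at s within {0..})"
        by (rule DERIV_minus[OF dH[OF \<open>s \<ge> 0\<close>]])
    qed (use that in auto)
    ultimately show ?thesis using x0 y0(2) by simp
  qed
  have Wx: "w0 \<le> W (x t)" if "t \<ge> 0" for t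
    unfolding w0_def x0[symmetric]
    by (rule incr[OF dW]) (use that pos g_nonneg in auto)
  define K where "K = {y. H y = H e \<and> w0 \<le> W y \<and> dist y e \<le> r}"
  have xK: "x t \<in> K" if "t \<ge> 0" for t
    unfolding K_def using Hx[OF that] Wx[OF that] xb[OF that] by auto
  have "compact K"
  proof -
    have "closed K" unfolding K_def Collect_conj_eq
      by (intro closed_Int closed_Collect_eq closed_Collect_le cont_H cont_W continuous_intros)
    moreover have "bounded K"
      by (rule bounded_subset[OF bounded_cball[of e r]]) (auto simp: K_def dist_commute)
    ultimately show ?thesis by (simp add: compact_eq_bounded_closed)
  qed
  have "\<exists>\<delta>>0. \<forall>y\<in>K. \<delta> \<le> g y"
  proof (cases "K = {}")
    case True then show ?thesis by (intro exI[of _ 1]) auto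
  next
    case False
    then obtain z where z: "z \<in> K" "\<And>y. y \<in> K \<Longrightarrow> g z \<le> g y"
      using continuous_attains_inf[OF \<open>compact K\<close> False cont_g] by blast
    have "g z > 0"
    proof (rule ccontr)
      assume "\<not> g z > 0"
      then have gz: "g z = 0" using g_nonneg[of z] by simp
      have zK: "H z = H e" "w0 \<le> W z" "dist z e \<le> r" using z(1) unfolding K_def by auto
      have "z \<noteq> 0" using zK(3) r(2) by (auto simp: dist_norm)
      then have "W z \<le> 0" using uniq[OF gz _ _ _ zK(1)] r(3)[OF zK(3)] by blast
      then show False using zK(2) w0 by simp
    qed
    then show ?thesis using z by blast
  qed
  then obtain \<delta> where \<delta>: "\<delta> > 0" "\<And>y. y \<in> K \<Longrightarrow> \<delta> \<le> g y" by blast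
  obtain M where M: "\<And>y. dist y e \<le> r \<Longrightarrow> W y \<le> M"
  proof -
    obtain z where "z \<in> cball e r" "\<And>y. y \<in> cball e r \<Longrightarrow> W y \<le> W z"
      using continuous_attains_sup[OF compact_cball _ cont_W, of e r] r(1) by auto
    then show ?thesis using that by (auto simp: dist_commute)
  qed
  have lin: "w0 + 2 * eps * \<delta> * t \<le> W (x t)" if "t \<ge> 0" for t
  proof -
    have "(\<lambda>t. W (x t) - 2 * eps * \<delta> * t) 0 \<le> (\<lambda>t. W (x t) - 2 * eps * \<delta> * t) t"
    proof (rule incr[where \<phi>'="\<lambda>t. 2 * eps * g (x t) - 2 * eps * \<delta> * 1"])
      fix s :: real assume "s \<ge> 0"
      show "((\<lambda>t. W (x t) - 2 * eps * \<delta> * t) has_real_derivative 2 * eps * g (x s) - 2 * eps * \<delta> * 1) (at s within {0..})"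
        by (intro DERIV_diff DERIV_cmult DERIV_ident dW[OF \<open>s \<ge> 0\<close>])
      have "\<delta> \<le> g (x s)" using \<delta>(2) xK \<open>s \<ge> 0\<close> by blast
      then show "2 * eps * g (x s) - 2 * eps * \<delta> * 1 \<ge> 0" using pos(4) by simp
    qed (use that in auto)
    then show ?thesis using x0 w0_def by simp
  qed
  have "w0 \<le> M" using M[of y0] xb[of 0] x0 w0_def by simp
  define T where "T = (M - w0) / (2 * eps * \<delta>) + 1"
  have T0: "T \<ge> 0" unfolding T_def using \<open>w0 \<le> M\<close> pos(4) \<delta>(1) by simp
  have "2 * eps * \<delta> * T = M - w0 + 2 * eps * \<delta>" unfolding T_def using pos(4) \<delta>(1) by (simp add: field_simps)
  then have "M < W (x T)" using lin[OF T0] mult_pos_pos[OF pos(4) \<delta>(1)] by linarith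
  moreover have "W (x T) \<le> M" using M xb[OF T0] by simp
  ultimately show False by simp
qed

end

theorem theorem6p4:
  fixes a1 a2 a3 a b c eps lam :: real
  assumes "0 < a1" "a1 < a2" "a2 < a3"
    and "0 < eps"
    and "(a, b, c) \<noteq> (0, 0, 0)"
    and "0 < lam" "lam < a1"
  shows "\<not> lyapunov_stable (revised_field eps a1 a2 a3 a b c) (e2 a1 a2 a3 a b c lam)"
proof -
  interpret sysloc a1 a2 a3 a b c eps lam using assms by unfold_locales
  show ?thesis using main unfolding F_def e_def .
qed

end
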